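(* In the setting of the context (with assumptions (A.1)–(A.3)), suppose the PMM generates infinite sequences $\{(u_k,v_k)\}$, $\{(z_k,w_k)\}$, $\{\gamma_k\}$, $\{\rho_k\}$, and define $x_k=z_{k-1}+\lambda w_{k-1}+\lambda(Cv_k-d)$ and $y_k=x_k-\lambda(w_{k-1}-Mu_k)$. Let $d_0$ be the distance from $(z_0,w_0)$ to the set $S_e(\partial h_1,\partial h_2)$ and $\tau=\min\{\lambda,1/\lambda\}$. Then for all $k=1,2,\dots$, $$0\in\partial g(v_k)+C^*x_k,\qquad 0\in\partial f(u_k)+M^*y_k,$$ and there exists an index $1\le i\le k$ such that $$\|Mu_i+Cv_i-d\|\le\frac{2d_0}{(1-\bar\rho)\tau\sqrt k},\qquad \|x_i-y_i\|\le\frac{2d_0}{(1-\bar\rho)\tau\sqrt k}.$$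
   Context: Let $f:\mathbb{R}^{m_1}\to(-\infty,\infty]$, $g:\mathbb{R}^{m_2}\to(-\infty,\infty]$ be proper closed convex, $M:\mathbb{R}^{m_1}\to\mathbb{R}^n$, $C:\mathbb{R}^{m_2}\to\mathbb{R}^n$ linear, $d\in\mathbb{R}^n$; consider $\min\{f(u)+g(v):Mu+Cv=d\}$ with Lagrangian $L(u,v,z)=f(u)+g(v)+\langle Mu+Cv-d,z\rangle$. A saddle point is $(u^*,v^*,z^* )$ with $L(u^*,v^*,z^* )$ finite and $\min_{(u,v)}L(u,v,z^* )=L(u^*,v^*,z^* )=\max_zL(u^*,v^*,z)$. Let $h_1(z)=f^*(-M^*z)$, $h_2(z)=g^*(-C^*z)+\langle d,z\rangle$ ($^*$ on functions = Fenchel conjugate, on operators = adjoint), and $S_e(\partial h_1,\partial h_2)=\{(z,w)\in\mathbb{R}^n\times\mathbb{R}^n:-w\in\partial h_1(z),\ w\in\partial h_2(z)\}$ (a closed convex set). Standing assumptions: (A.1) $L$ has a saddle point; (A.2) $\mathrm{ri}(\mathrm{dom} f^* )\cap\mathrm{range}(M^* )\ne\emptyset$; (A.3) $\mathrm{ri}(\mathrm{dom} g^* )\cap\mathrm{range}(C^* )\ne\emptyset$. PMM: given $(z_0,w_0)\in\mathbb{R}^n\times\mathbb{R}^n$, $\lambda>0$, $\bar\rho\in[0,1)$, for $k=1,2,\dots$: (1) let $v_k$ be a minimizer of $g(v)+\langle z_{k-1}+\lambda w_{k-1},Cv-d\rangle+\frac\lambda2\|Cv-d\|^2$ and $u_k$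 a minimizer of $f(u)+\langle z_{k-1}+\lambda(Cv_k-d),Mu\rangle+\frac\lambda2\|Mu\|^2$; (2) if $\|Mu_k+Cv_k-d\|+\|Mu_k-w_{k-1}\|=0$ stop; otherwise set $\gamma_k=\dfrac{\lambda\|Cv_k-d+w_{k-1}\|^2+\lambda\langle d-Cv_k-Mu_k,w_{k-1}-Mu_k\rangle}{\|Mu_k+Cv_k-d\|^2+\lambda^2\|Mu_k-w_{k-1}\|^2}$; (3) choose $\rho_k\in[1-\bar\rho,1+\bar\rho]$ and set $z_k=z_{k-1}+\rho_k\gamma_k(Mu_k+Cv_k-d)$, $w_k=w_{k-1}-\rho_k\gamma_k\lambda(w_{k-1}-Mu_k)$. *)

theory Defs
  imports "HOL-Analysis.Analysis"
begin

definition proper_fun :: "('a::euclidean_space \<Rightarrow> ereal) \<Rightarrow> bool" where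
  "proper_fun f \<longleftrightarrow> (\<forall>x. f x \<noteq> -\<infinity>) \<and> (\<exists>x. f x \<noteq> \<infinity>)"

definition epigraph :: "('a::euclidean_space \<Rightarrow> ereal) \<Rightarrow> ('a \<times> real) set" where
  "epigraph f = {(x, t). f x \<le> ereal t}"

definition convex_fun :: "('a::euclidean_space \<Rightarrow> ereal) \<Rightarrow> bool" where
  "convex_fun f \<longleftrightarrow> convex (epigraph f)"

definition closed_fun :: "('a::euclidean_space \<Rightarrow> ereal) \<Rightarrow> bool" where
  "closed_fun f \<longleftrightarrow> closed (epigraph f)"

definition proper_closed_convex :: "('a::euclidean_space \<Rightarrow> ereal) \<Rightarrow> bool" where
  "proper_closed_convex f \<longleftrightarrow> proper_fun f \<and> closed_fun f \<and> convex_fun f"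

definition effdom :: "('a::euclidean_space \<Rightarrow> ereal) \<Rightarrow> 'a set" where
  "effdom f = {x. f x < \<infinity>}"

definition fconj :: "('a::euclidean_space \<Rightarrow> ereal) \<Rightarrow> 'a \<Rightarrow> ereal" where
  "fconj f y = (SUP x. ereal (y \<bullet> x) - f x)"

definition subdiff :: "('a::euclidean_space \<Rightarrow> ereal) \<Rightarrow> 'a \<Rightarrow> 'a set" where
  "subdiff f x = {s. \<bar>f x\<bar> \<noteq> \<infinity> \<and> (\<forall>y. f y \<ge> f x + ereal (s \<bullet> (y - x)))}"

definition lagr :: "('a::euclidean_space \<Rightarrow> ereal) \<Rightarrow> ('b::euclidean_space \<Rightarrow> ereal)
    \<Rightarrow> ('a \<Rightarrow> 'c::euclidean_space) \<Rightarrow> ('b \<Rightarrow> 'c) \<Rightarrow> 'c \<Rightarrow> 'a \<Rightarrow> 'b \<Rightarrow> 'c \<Rightarrow> ereal" where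
  "lagr f g M C d u v z = f u + g v + ereal ((M u + C v - d) \<bullet> z)"

definition saddle_point :: "('a::euclidean_space \<Rightarrow> ereal) \<Rightarrow> ('b::euclidean_space \<Rightarrow> ereal)
    \<Rightarrow> ('a \<Rightarrow> 'c::euclidean_space) \<Rightarrow> ('b \<Rightarrow> 'c) \<Rightarrow> 'c \<Rightarrow> 'a \<Rightarrow> 'b \<Rightarrow> 'c \<Rightarrow> bool" where
  "saddle_point f g M C d u' v' z' \<longleftrightarrow>
     \<bar>lagr f g M C d u' v' z'\<bar> \<noteq> \<infinity> \<and>
     (\<forall>u v. lagr f g M C d u' v' z' \<le> lagr f g M C d u v z') \<and>
     (\<forall>z. lagr f g M C d u' v' z \<le> lagr f g M C d u' v' z')"

definition h1fun :: "('a::euclidean_space \<Rightarrow> ereal) \<Rightarrow> ('a \<Rightarrow> 'c::euclidean_space) \<Rightarrow> 'c \<Rightarrow> ereal" where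
  "h1fun f M z = fconj f (- adjoint M z)"

definition h2fun :: "('b::euclidean_space \<Rightarrow> ereal) \<Rightarrow> ('b \<Rightarrow> 'c::euclidean_space) \<Rightarrow> 'c \<Rightarrow> 'c \<Rightarrow> ereal" where
  "h2fun g C d z = fconj g (- adjoint C z) + ereal (d \<bullet> z)"

definition Se :: "('c::euclidean_space \<Rightarrow> ereal) \<Rightarrow> ('c \<Rightarrow> ereal) \<Rightarrow> ('c \<times> 'c) set" where
  "Se h1 h2 = {(z, w). - w \<in> subdiff h1 z \<and> w \<in> subdiff h2 z}"

end

theory Submission imports Defs begin

lemma subdiff_mono:
  assumes "s \<in> subdiff h x" "t \<in> subdiff h y"
  shows "0 \<le> (s - t) \<bullet> (x - y)"
proof -
  from assms obtain a b where ha: "h x = ereal a" and hb: "h y = ereal b"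
    unfolding subdiff_def by (auto elim!: ereal_cases[of "h x"] ereal_cases[of "h y"])
  from assms have 1: "h y \<ge> h x + ereal (s \<bullet> (y - x))" and 2: "h x \<ge> h y + ereal (t \<bullet> (x - y))"
    unfolding subdiff_def by auto
  from 1 2 ha hb have "b \<ge> a + s \<bullet> (y - x)" "a \<ge> b + t \<bullet> (x - y)" by auto
  then show ?thesis by (simp add: inner_diff_left inner_diff_right inner_commute algebra_simps)
qed

lemma fconj_ge: "fconj f s \<ge> ereal (s \<bullet> u) - f u"
  unfolding fconj_def by (rule SUP_upper) auto

lemma fconj_eq:
  assumes "s \<in> subdiff f u"
  shows "fconj f s = ereal (s \<bullet> u) - f u"
proof (rule antisym)
  from assms obtain c where fc: "f u = ereal c"
    unfolding subdiff_def by (auto elim!: ereal_cases[of "f u"])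
  from assms have sub: "\<And>y. f y \<ge> ereal c + ereal (s \<bullet> (y - u))" unfolding subdiff_def fc by auto
  show "fconj f s \<le> ereal (s \<bullet> u) - f u"
    unfolding fconj_def
  proof (rule SUP_least)
    fix x
    have "f x \<ge> ereal (c + s \<bullet> (x - u))" using sub[of x] by simp
    then show "ereal (s \<bullet> x) - f x \<le> ereal (s \<bullet> u) - f u"
      unfolding fc by (cases "f x") (auto simp: inner_diff_right)
  qed
  show "ereal (s \<bullet> u) - f u \<le> fconj f s" by (rule fconj_ge)
qed

lemma conj_chain:
  fixes L :: "'a::euclidean_space \<Rightarrow> 'c::euclidean_space"
  assumes L: "linear L" and s: "- adjoint L y \<in> subdiff f u"
  shows "- L u \<in> subdiff (\<lambda>z. fconj f (- adjoint L z)) y"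
proof -
  from s obtain c where fc: "f u = ereal c"
    unfolding subdiff_def by (auto elim!: ereal_cases[of "f u"])
  have eq: "fconj f (- adjoint L y) = ereal ((- adjoint L y) \<bullet> u - c)"
    using fconj_eq[OF s] fc by simp
  have adj: "\<And>z. (- adjoint L z) \<bullet> u = - (L u \<bullet> z)"
    using adjoint_works[OF L] by (simp add: inner_commute)
  show ?thesis unfolding subdiff_def
  proof (intro CollectI conjI allI)
    show "\<bar>fconj f (- adjoint L y)\<bar> \<noteq> \<infinity>" using eq by simp
    fix z
    have "fconj f (- adjoint L z) \<ge> ereal ((- adjoint L z) \<bullet> u - c)"
      using fconj_ge[where f=f and s="- adjoint L z" and u=u] fc by simp
    moreover have "(- adjoint L z) \<bullet> u - c = ((- adjoint L y) \<bullet> u - c) + (- L u) \<bullet> (z - y)"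
      using adj[of z] adj[of y] by (simp add: inner_diff_right)
    ultimately have "fconj f (- adjoint L z) \<ge> ereal (((- adjoint L y) \<bullet> u - c) + (- L u) \<bullet> (z - y))"
      by (simp only:)
    then show "fconj f (- adjoint L z) \<ge> fconj f (- adjoint L y) + ereal ((- L u) \<bullet> (z - y))"
      unfolding eq by simp
  qed
qed

lemma subdiff_add_lin:
  assumes "p \<in> subdiff h y"
  shows "p + d \<in> subdiff (\<lambda>z. h z + ereal (d \<bullet> z)) y"
proof -
  from assms obtain c where hc: "h y = ereal c"
    unfolding subdiff_def by (auto elim!: ereal_cases[of "h y"])
  from assms have sub: "\<And>z. h z \<ge> ereal (c + p \<bullet> (z - y))" unfolding subdiff_def hc by auto
  show ?thesis unfolding subdiff_def
  proof (intro CollectI conjI allI)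
    show "\<bar>h y + ereal (d \<bullet> y)\<bar> \<noteq> \<infinity>" using hc by simp
    fix z
    have "h z + ereal (d \<bullet> z) \<ge> ereal (c + p \<bullet> (z - y)) + ereal (d \<bullet> z)"
      using sub[of z] by (cases "h z") auto
    moreover have "c + p \<bullet> (z - y) + d \<bullet> z = c + d \<bullet> y + (p + d) \<bullet> (z - y)"
      by (simp add: inner_diff_right inner_add_left)
    ultimately show "h z + ereal (d \<bullet> z) \<ge> h y + ereal (d \<bullet> y) + ereal ((p + d) \<bullet> (z - y))"
      unfolding hc by (metis plus_ereal.simps(1))
  qed
qed

lemma opt_subdiff:
  fixes g :: "'b::euclidean_space \<Rightarrow> ereal" and q :: "'b \<Rightarrow> real"
  assumes pr: "proper_fun g" and cv: "convex_fun g"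
    and mn: "\<And>v'. g v0 + ereal (q v0) \<le> g v' + ereal (q v')"
    and ex: "\<And>v' t. q (v0 + t *\<^sub>R (v' - v0)) = q v0 + t * (c \<bullet> (v' - v0)) + t^2 * B v'"
  shows "- c \<in> subdiff g v0"
proof -
  from pr obtain x where gx: "g x \<noteq> \<infinity>" and nm: "\<And>x. g x \<noteq> -\<infinity>" unfolding proper_fun_def by auto
  have "g x + ereal (q x) \<noteq> \<infinity>" using gx nm[of x] by (cases "g x") auto
  then have "g v0 + ereal (q v0) \<noteq> \<infinity>" using mn[of x] by (metis ereal_infty_less_eq(1))
  then have "g v0 \<noteq> \<infinity>" by auto
  then obtain a where ga: "g v0 = ereal a" using nm[of v0] by (cases "g v0") auto
  have main: "g y \<ge> ereal a + ereal ((- c) \<bullet> (y - v0))" for y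
  proof (cases "g y")
    case (real b)
    have key: "a \<le> b + c \<bullet> (y - v0) + t * B y" if t: "0 < t" "t < 1" for t
    proof -
      have e1: "(v0, a) \<in> epigraph g" "(y, b) \<in> epigraph g" using ga real unfolding epigraph_def by auto
      have "(1 - t) *\<^sub>R (v0, a) + t *\<^sub>R (y, b) \<in> epigraph g"
        using convexD[OF cv[unfolded convex_fun_def] e1, of "1 - t" t] t by simp
      moreover have "(1 - t) *\<^sub>R (v0, a) + t *\<^sub>R (y, b) = (v0 + t *\<^sub>R (y - v0), (1 - t) * a + t * b)"
        by (simp add: algebra_simps)
      ultimately have le: "g (v0 + t *\<^sub>R (y - v0)) \<le> ereal ((1 - t) * a + t * b)"
        unfolding epigraph_def by auto
      have "ereal (a + q v0) \<le> g (v0 + t *\<^sub>R (y - v0)) + ereal (q (v0 + t *\<^sub>R (y - v0)))"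
        using mn[of "v0 + t *\<^sub>R (y - v0)"] ga by simp
      also have "\<dots> \<le> ereal ((1 - t) * a + t * b) + ereal (q (v0 + t *\<^sub>R (y - v0)))"
        using le by (rule add_right_mono)
      finally have "a + q v0 \<le> (1 - t) * a + t * b + (q v0 + t * (c \<bullet> (y - v0)) + t^2 * B y)"
        by (simp add: ex)
      then have "t * a \<le> t * (b + c \<bullet> (y - v0) + t * B y)"
        by (simp add: algebra_simps power2_eq_square)
      then show ?thesis using t by simp
    qed
    have "a \<le> b + c \<bullet> (y - v0)"
    proof (rule ccontr)
      assume "\<not> ?thesis"
      then have dp: "0 < a - b - c \<bullet> (y - v0)" by simp
      show False
      proof (cases "B y \<le> 0")
        case True
        then show False using key[of "1/2"] dp by simp
      next
        case False
        define t where "t = min (1/2) ((a - b - c \<bullet> (y - v0)) / (2 * B y))"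
        have t0: "0 < t" "t < 1" using dp False unfolding t_def by auto
        have "t * B y \<le> (a - b - c \<bullet> (y - v0)) / (2 * B y) * B y"
          using False unfolding t_def by (intro mult_right_mono) auto
        also have "\<dots> = (a - b - c \<bullet> (y - v0)) / 2" using False by simp
        finally show False using key[OF t0] dp by simp
      qed
    qed
    then show ?thesis using real by (simp add: inner_diff_right)
  next
    case PInf then show ?thesis by simp
  next
    case MInf then show ?thesis using nm by simp
  qed
  show ?thesis unfolding subdiff_def using ga main by (simp add: inner_minus_left)
qed

lemma saddle_Se:
  fixes f :: "'a::euclidean_space \<Rightarrow> ereal" and g :: "'b::euclidean_space \<Rightarrow> ereal"
    and M :: "'a \<Rightarrow> 'c::euclidean_space" and C :: "'b \<Rightarrow> 'c"
  assumes pf: "proper_fun f" and pg: "proper_fun g" and M: "linear M" and C: "linear C"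
    and sp: "saddle_point f g M C d u' v' z'"
  shows "(z', M u') \<in> Se (h1fun f M) (h2fun g C d)"
proof -
  from pf have nf: "\<And>x. f x \<noteq> -\<infinity>" unfolding proper_fun_def by auto
  from pg have ng: "\<And>x. g x \<noteq> -\<infinity>" unfolding proper_fun_def by auto
  from sp have fin: "\<bar>f u' + g v' + ereal ((M u' + C v' - d) \<bullet> z')\<bar> \<noteq> \<infinity>"
    and mn: "\<And>u v. f u' + g v' + ereal ((M u' + C v' - d) \<bullet> z') \<le> f u + g v + ereal ((M u + C v - d) \<bullet> z')"
    and mx: "\<And>z. f u' + g v' + ereal ((M u' + C v' - d) \<bullet> z) \<le> f u' + g v' + ereal ((M u' + C v' - d) \<bullet> z')"
    unfolding saddle_point_def lagr_def by auto
  obtain fa where fa: "f u' = ereal fa" using fin nf[of u'] by (cases "f u'"; cases "g v'") auto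
  obtain gb where gb: "g v' = ereal gb" using fin ng[of v'] fa by (cases "g v'") auto
  define r where "r = M u' + C v' - d"
  have "fa + gb + r \<bullet> (z' + r) \<le> fa + gb + r \<bullet> z'" using mx[of "z' + r"] fa gb r_def by simp
  then have "r \<bullet> r \<le> 0" by (simp add: inner_add_right)
  then have r0: "r = 0" by (metis inner_eq_zero_iff inner_ge_zero order_antisym)
  then have Cv: "C v' - d = - M u'" unfolding r_def by (simp add: algebra_simps)
  have sf: "- adjoint M z' \<in> subdiff f u'"
    unfolding subdiff_def
  proof (intro CollectI conjI allI)
    show "\<bar>f u'\<bar> \<noteq> \<infinity>" using fa by simp
    fix u
    have e: "M u + C v' - d = M u - M u'" using Cv by (simp add: algebra_simps)
    have "ereal (fa + gb) \<le> f u + ereal gb + ereal ((M u - M u') \<bullet> z')"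
      using mn[of u v'] r0 unfolding r_def e fa gb by simp
    moreover have "(M u - M u') \<bullet> z' = - ((- adjoint M z') \<bullet> (u - u'))"
      using adjoint_works[OF M, of "u - u'" z'] by (simp add: linear_diff[OF M] inner_commute)
    ultimately show "f u' + ereal ((- adjoint M z') \<bullet> (u - u')) \<le> f u"
      using fa by (cases "f u") auto
  qed
  have sg: "- adjoint C z' \<in> subdiff g v'"
    unfolding subdiff_def
  proof (intro CollectI conjI allI)
    show "\<bar>g v'\<bar> \<noteq> \<infinity>" using gb by simp
    fix v
    have e: "M u' + C v - d = C v - C v'" using Cv by (simp add: algebra_simps)
    have "ereal (fa + gb) \<le> ereal fa + g v + ereal ((C v - C v') \<bullet> z')"
      using mn[of u' v] r0 unfolding r_def e fa gb by (simp add: add.commute)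
    moreover have "(C v - C v') \<bullet> z' = - ((- adjoint C z') \<bullet> (v - v'))"
      using adjoint_works[OF C, of "v - v'" z'] by (simp add: linear_diff[OF C] inner_commute)
    ultimately show "g v' + ereal ((- adjoint C z') \<bullet> (v - v')) \<le> g v"
      using gb by (cases "g v") auto
  qed
  have h1: "h1fun f M = (\<lambda>z. fconj f (- adjoint M z))" by (simp add: h1fun_def[abs_def])
  have h2: "h2fun g C d = (\<lambda>z. fconj g (- adjoint C z) + ereal (d \<bullet> z))" by (simp add: h2fun_def[abs_def])
  have 1: "- M u' \<in> subdiff (h1fun f M) z'" unfolding h1 by (rule conj_chain[OF M sf])
  have 2: "- C v' + d \<in> subdiff (h2fun g C d) z'" unfolding h2
    by (rule subdiff_add_lin[OF conj_chain[OF C sg]])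
  have "- C v' + d = M u'" using Cv by (simp add: algebra_simps)
  then show ?thesis using 1 2 unfolding Se_def by simp
qed

lemma mono_identity:
  fixes Z W U V zs ws :: "'c::real_inner" and lam :: real
  shows "(U - ws) \<bullet> (zs - (Z + lam *\<^sub>R W + lam *\<^sub>R V - lam *\<^sub>R (W - U)))
        + (ws + V) \<bullet> (zs - (Z + lam *\<^sub>R W + lam *\<^sub>R V))
      = - lam * ((norm (V + W))\<^sup>2 - (U + V) \<bullet> (W - U))
        - (Z - zs) \<bullet> (U + V) + lam * ((W - ws) \<bullet> (W - U))"
  by (simp add: power2_norm_eq_inner inner_diff_left inner_diff_right inner_add_left inner_add_right
      inner_commute algebra_simps)

lemma step_expand:
  fixes P Q r b :: "'c::real_inner" and s lam :: real
  shows "(norm (P + s *\<^sub>R r))\<^sup>2 + (norm (Q - (s * lam) *\<^sub>R b))\<^sup>2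
     = (norm P)\<^sup>2 + (norm Q)\<^sup>2 + 2 * s * (P \<bullet> r - lam * (Q \<bullet> b))
       + s\<^sup>2 * ((norm r)\<^sup>2 + lam\<^sup>2 * (norm b)\<^sup>2)"
  unfolding power2_norm_eq_inner by (simp add: inner_diff_left inner_diff_right inner_add_left inner_add_right
      inner_commute algebra_simps power2_eq_square)

lemma N_bound:
  fixes a b :: "'c::real_inner"
  shows "(norm (a - b))\<^sup>2 + (norm b)\<^sup>2 \<le> 2 * ((norm a)\<^sup>2 - (a - b) \<bullet> b)"
proof -
  have "2 * ((norm a)\<^sup>2 - (a - b) \<bullet> b) - ((norm (a - b))\<^sup>2 + (norm b)\<^sup>2) = (norm a)\<^sup>2"
    by (simp add: power2_norm_eq_inner inner_diff_left inner_diff_right inner_commute algebra_simps)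
  then show ?thesis by (smt (verit) zero_le_power2)
qed

lemma tau_bound:
  fixes R B2 N lam :: real
  assumes "lam > 0" "R \<ge> 0" "B2 \<ge> 0" "R + B2 \<le> 2 * N"
  shows "min lam (1 / lam) / 2 * (R + lam\<^sup>2 * B2) \<le> lam * N"
proof (cases "lam \<le> 1")
  case True
  then have "lam\<^sup>2 \<le> 1" using assms by (simp add: power_le_one)
  then have "R + lam\<^sup>2 * B2 \<le> 2 * N" using assms by (smt (verit) mult_right_mono mult_left_le_one_le)
  moreover have "lam \<le> 1 / lam" using True assms by (simp add: field_simps) (smt (verit) mult_left_le_one_le)
  then have m: "min lam (1 / lam) = lam" by simp
  have "lam * (R + lam\<^sup>2 * B2) \<le> lam * (2 * N)"
    using \<open>R + lam\<^sup>2 * B2 \<le> 2 * N\<close> assms(1) by (intro mult_left_mono) auto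
  then show ?thesis unfolding m by simp
next
  case False
  have "1 / lam < lam" using False assms by (simp add: field_simps) (smt (verit) mult_less_cancel_left1)
  then have m: "min lam (1 / lam) = 1 / lam" by simp
  have "R \<le> lam\<^sup>2 * R" using False assms
    by (metis less_eq_real_def mult_1 mult_right_mono not_le one_le_power)
  then have "R + lam\<^sup>2 * B2 \<le> lam\<^sup>2 * (2 * N)" using assms
    by (smt (verit) distrib_left mult_left_mono zero_le_power2)
  then have "(R + lam\<^sup>2 * B2) / lam \<le> 2 * lam * N" using assms
    by (simp add: divide_le_eq power2_eq_square algebra_simps)
  then show ?thesis unfolding m by (simp add: field_simps)
qed

lemma fejer_step:
  fixes Z W U V zs ws :: "'c::real_inner" and lam rho gam G2 :: real
  assumes lam: "lam > 0" and rho: "0 \<le> rho"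
    and G: "G2 = (norm (U + V))\<^sup>2 + lam\<^sup>2 * (norm (W - U))\<^sup>2" and Gp: "G2 > 0"
    and gam: "gam = (lam * (norm (V + W))\<^sup>2 + lam * ((- (U + V)) \<bullet> (W - U))) / G2"
    and mono: "0 \<le> (U - ws) \<bullet> (zs - (Z + lam *\<^sub>R W + lam *\<^sub>R V - lam *\<^sub>R (W - U)))
        + (ws + V) \<bullet> (zs - (Z + lam *\<^sub>R W + lam *\<^sub>R V))"
  shows "(norm (Z + (rho * gam) *\<^sub>R (U + V) - zs))\<^sup>2 + (norm (W - (rho * gam * lam) *\<^sub>R (W - U) - ws))\<^sup>2
          \<le> (norm (Z - zs))\<^sup>2 + (norm (W - ws))\<^sup>2 - rho * (2 - rho) * gam\<^sup>2 * G2"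
    and "min lam (1 / lam) / 2 \<le> gam"
proof -
  define N where "N = (norm (V + W))\<^sup>2 - (U + V) \<bullet> (W - U)"
  have "gam * G2 = lam * (norm (V + W))\<^sup>2 + lam * ((- (U + V)) \<bullet> (W - U))" using Gp unfolding gam by simp
  then have gG: "gam * G2 = lam * N" unfolding N_def by (simp only: inner_minus_left) (simp add: algebra_simps)
  have "(norm ((V + W) - (W - U)))\<^sup>2 + (norm (W - U))\<^sup>2 \<le> 2 * ((norm (V + W))\<^sup>2 - ((V + W) - (W - U)) \<bullet> (W - U))"
    by (rule N_bound)
  moreover have "(V + W) - (W - U) = U + V" by (simp add: algebra_simps)
  ultimately have Nb: "(norm (U + V))\<^sup>2 + (norm (W - U))\<^sup>2 \<le> 2 * N" unfolding N_def by simp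
  have "min lam (1 / lam) / 2 * G2 \<le> lam * N" unfolding G
    by (rule tau_bound[OF lam _ _ Nb]) auto
  then have "min lam (1 / lam) / 2 * G2 \<le> gam * G2" using gG by simp
  then show gt: "min lam (1 / lam) / 2 \<le> gam" using Gp by simp
  have "0 \<le> min lam (1 / lam) / 2" using lam by simp
  then have g0: "0 \<le> gam" using gt by (rule order_trans)
  have X: "(Z - zs) \<bullet> (U + V) - lam * ((W - ws) \<bullet> (W - U)) \<le> - lam * N"
    using mono unfolding mono_identity N_def by simp
  define s where "s = rho * gam"
  have s0: "0 \<le> s" unfolding s_def using rho g0 by simp
  have e1: "Z + (rho * gam) *\<^sub>R (U + V) - zs = (Z - zs) + s *\<^sub>R (U + V)" unfolding s_def by (simp add: algebra_simps)
  have e2: "W - (rho * gam * lam) *\<^sub>R (W - U) - ws = (W - ws) - (s * lam) *\<^sub>R (W - U)" unfolding s_def by (simp add: algebra_simps)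
  have "(norm (Z + (rho * gam) *\<^sub>R (U + V) - zs))\<^sup>2 + (norm (W - (rho * gam * lam) *\<^sub>R (W - U) - ws))\<^sup>2
     = (norm (Z - zs))\<^sup>2 + (norm (W - ws))\<^sup>2 + 2 * s * ((Z - zs) \<bullet> (U + V) - lam * ((W - ws) \<bullet> (W - U)))
       + s\<^sup>2 * G2"
    unfolding e1 e2 step_expand G by simp
  also have "\<dots> \<le> (norm (Z - zs))\<^sup>2 + (norm (W - ws))\<^sup>2 + 2 * s * (- lam * N) + s\<^sup>2 * G2"
    using mult_left_mono[OF X, of "2 * s"] s0 by linarith
  also have "\<dots> = (norm (Z - zs))\<^sup>2 + (norm (W - ws))\<^sup>2 - rho * (2 - rho) * gam\<^sup>2 * G2"
    using gG unfolding s_def by (simp add: algebra_simps power2_eq_square)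
  finally show "(norm (Z + (rho * gam) *\<^sub>R (U + V) - zs))\<^sup>2 + (norm (W - (rho * gam * lam) *\<^sub>R (W - U) - ws))\<^sup>2
          \<le> (norm (Z - zs))\<^sup>2 + (norm (W - ws))\<^sup>2 - rho * (2 - rho) * gam\<^sup>2 * G2" .
qed

lemma quad_expand:
  fixes A e h :: "'c::real_inner" and lam t :: real
  shows "A \<bullet> (e + t *\<^sub>R h) + lam / 2 * (norm (e + t *\<^sub>R h))\<^sup>2
       = A \<bullet> e + lam / 2 * (norm e)\<^sup>2 + t * (h \<bullet> (A + lam *\<^sub>R e)) + t\<^sup>2 * (lam / 2 * (norm h)\<^sup>2)"
  unfolding power2_norm_eq_inner
  by (simp add: inner_add_left inner_add_right inner_commute algebra_simps power2_eq_square)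

lemma telescope:
  fixes E D :: "nat \<Rightarrow> real"
  assumes "\<And>j. j \<ge> 1 \<Longrightarrow> E j \<le> E (j - 1) - c * D j"
  shows "c * (\<Sum>j\<in>{1..k}. D j) \<le> E 0 - E k"
proof (induction k)
  case 0 then show ?case by simp
next
  case (Suc k)
  have "c * (\<Sum>j\<in>{1..Suc k}. D j) = c * (\<Sum>j\<in>{1..k}. D j) + c * D (Suc k)"
    by (simp add: distrib_left)
  also have "\<dots> \<le> E 0 - E (Suc k)" using Suc assms[of "Suc k"] by simp
  finally show ?case .
qed

lemma infdist_bound:
  fixes p0 :: "'x::metric_space"
  assumes K: "K > 0" and A: "A \<noteq> {}" and b: "\<And>p. p \<in> A \<Longrightarrow> (K * X)\<^sup>2 \<le> 4 * (dist p0 p)\<^sup>2"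
  shows "X \<le> 2 * infdist p0 A / K"
proof -
  have "K * X / 2 \<le> dist p0 p" if "p \<in> A" for p
  proof -
    have "(K * X)\<^sup>2 \<le> (2 * dist p0 p)\<^sup>2" using b[OF that] by (simp add: power_mult_distrib)
    then have "K * X \<le> 2 * dist p0 p" by (rule power2_le_imp_le) simp
    then show ?thesis by simp
  qed
  then have "K * X / 2 \<le> infdist p0 A" unfolding infdist_notempty[OF A]
    by (intro cINF_greatest A) auto
  then show ?thesis using K by (simp add: field_simps)
qed

theorem mainTheorem5:
  fixes f :: "'a::euclidean_space \<Rightarrow> ereal" and g :: "'b::euclidean_space \<Rightarrow> ereal"
    and M :: "'a \<Rightarrow> 'c::euclidean_space" and C :: "'b \<Rightarrow> 'c" and d :: 'c
    and lam rhobar :: real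
    and u :: "nat \<Rightarrow> 'a" and v :: "nat \<Rightarrow> 'b" and z w :: "nat \<Rightarrow> 'c"
    and gam rho :: "nat \<Rightarrow> real"
  assumes f_pcc: "proper_closed_convex f" and g_pcc: "proper_closed_convex g"
    and M_lin: "linear M" and C_lin: "linear C"
    and A1: "\<exists>u' v' z'. saddle_point f g M C d u' v' z'"
    and A2: "rel_interior (effdom (fconj f)) \<inter> range (adjoint M) \<noteq> {}"
    and A3: "rel_interior (effdom (fconj g)) \<inter> range (adjoint C) \<noteq> {}"
    and lam_pos: "lam > 0" and rhobar: "0 \<le> rhobar" "rhobar < 1"
    and v_min: "\<And>k v'. k \<ge> 1 \<Longrightarrow>
        g (v k) + ereal ((z (k-1) + lam *\<^sub>R w (k-1)) \<bullet> (C (v k) - d) + lam / 2 * (norm (C (v k) - d))\<^sup>2)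
        \<le> g v' + ereal ((z (k-1) + lam *\<^sub>R w (k-1)) \<bullet> (C v' - d) + lam / 2 * (norm (C v' - d))\<^sup>2)"
    and u_min: "\<And>k u'. k \<ge> 1 \<Longrightarrow>
        f (u k) + ereal ((z (k-1) + lam *\<^sub>R (C (v k) - d)) \<bullet> M (u k) + lam / 2 * (norm (M (u k)))\<^sup>2)
        \<le> f u' + ereal ((z (k-1) + lam *\<^sub>R (C (v k) - d)) \<bullet> M u' + lam / 2 * (norm (M u'))\<^sup>2)"
    and no_stop: "\<And>k. k \<ge> 1 \<Longrightarrow> norm (M (u k) + C (v k) - d) + norm (M (u k) - w (k-1)) \<noteq> 0"
    and gam_def: "\<And>k. k \<ge> 1 \<Longrightarrow> gam k =
        (lam * (norm (C (v k) - d + w (k-1)))\<^sup>2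
           + lam * ((d - C (v k) - M (u k)) \<bullet> (w (k-1) - M (u k))))
        / ((norm (M (u k) + C (v k) - d))\<^sup>2 + lam\<^sup>2 * (norm (M (u k) - w (k-1)))\<^sup>2)"
    and rho_range: "\<And>k. k \<ge> 1 \<Longrightarrow> 1 - rhobar \<le> rho k \<and> rho k \<le> 1 + rhobar"
    and z_upd: "\<And>k. k \<ge> 1 \<Longrightarrow> z k = z (k-1) + (rho k * gam k) *\<^sub>R (M (u k) + C (v k) - d)"
    and w_upd: "\<And>k. k \<ge> 1 \<Longrightarrow> w k = w (k-1) - (rho k * gam k * lam) *\<^sub>R (w (k-1) - M (u k))"
  defines "x \<equiv> (\<lambda>k. z (k-1) + lam *\<^sub>R w (k-1) + lam *\<^sub>R (C (v k) - d))"
    and "y \<equiv> (\<lambda>k. z (k-1) + lam *\<^sub>R w (k-1) + lam *\<^sub>R (C (v k) - d) - lam *\<^sub>R (w (k-1) - M (u k)))"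
    and "d0 \<equiv> infdist (z 0, w 0) (Se (h1fun f M) (h2fun g C d))"
    and "tau \<equiv> min lam (1 / lam)"
  shows "\<forall>k\<ge>1.
      0 \<in> {s + adjoint C (x k) | s. s \<in> subdiff g (v k)}
    \<and> 0 \<in> {s + adjoint M (y k) | s. s \<in> subdiff f (u k)}
    \<and> (\<exists>i\<in>{1..k}.
          norm (M (u i) + C (v i) - d) \<le> 2 * d0 / ((1 - rhobar) * tau * sqrt (real k))
        \<and> norm (x i - y i) \<le> 2 * d0 / ((1 - rhobar) * tau * sqrt (real k)))"
proof -
  have pf: "proper_fun f" and cf: "convex_fun f" using f_pcc unfolding proper_closed_convex_def by auto
  have pg: "proper_fun g" and cg: "convex_fun g" using g_pcc unfolding proper_closed_convex_def by auto
  define S where "S = Se (h1fun f M) (h2fun g C d)"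
  from A1 obtain u' v' z' where sp: "saddle_point f g M C d u' v' z'" by blast
  have Sne: "S \<noteq> {}" using saddle_Se[OF pf pg M_lin C_lin sp] unfolding S_def by blast
  have h1: "h1fun f M = (\<lambda>z. fconj f (- adjoint M z))" by (simp add: h1fun_def[abs_def])
  have h2: "h2fun g C d = (\<lambda>z. fconj g (- adjoint C z) + ereal (d \<bullet> z))" by (simp add: h2fun_def[abs_def])
  have sg: "- adjoint C (x k) \<in> subdiff g (v k)" if hk: "k \<ge> 1" for k
  proof (rule opt_subdiff[OF pg cg, where q = "\<lambda>v. (z (k-1) + lam *\<^sub>R w (k-1)) \<bullet> (C v - d) + lam / 2 * (norm (C v - d))\<^sup>2"
        and B = "\<lambda>v'. lam / 2 * (norm (C (v' - v k)))\<^sup>2"])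
    show "g (v k) + ereal ((z (k-1) + lam *\<^sub>R w (k-1)) \<bullet> (C (v k) - d) + lam / 2 * (norm (C (v k) - d))\<^sup>2)
        \<le> g v' + ereal ((z (k-1) + lam *\<^sub>R w (k-1)) \<bullet> (C v' - d) + lam / 2 * (norm (C v' - d))\<^sup>2)" for v'
      using v_min[OF hk] .
    fix v' and t :: real
    have e: "C (v k + t *\<^sub>R (v' - v k)) - d = (C (v k) - d) + t *\<^sub>R C (v' - v k)"
      by (simp add: linear_add[OF C_lin] linear_scale[OF C_lin])
    have a: "adjoint C (x k) \<bullet> (v' - v k) = C (v' - v k) \<bullet> ((z (k-1) + lam *\<^sub>R w (k-1)) + lam *\<^sub>R (C (v k) - d))"
      using adjoint_works[OF C_lin, of "v' - v k" "x k"] unfolding x_def by (simp add: inner_commute algebra_simps)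
    show "(z (k-1) + lam *\<^sub>R w (k-1)) \<bullet> (C (v k + t *\<^sub>R (v' - v k)) - d) + lam / 2 * (norm (C (v k + t *\<^sub>R (v' - v k)) - d))\<^sup>2
       = (z (k-1) + lam *\<^sub>R w (k-1)) \<bullet> (C (v k) - d) + lam / 2 * (norm (C (v k) - d))\<^sup>2
         + t * (adjoint C (x k) \<bullet> (v' - v k)) + t\<^sup>2 * (lam / 2 * (norm (C (v' - v k)))\<^sup>2)"
      unfolding e a by (rule quad_expand)
  qed
  have sf: "- adjoint M (y k) \<in> subdiff f (u k)" if hk: "k \<ge> 1" for k
  proof (rule opt_subdiff[OF pf cf, where q = "\<lambda>u. (z (k-1) + lam *\<^sub>R (C (v k) - d)) \<bullet> M u + lam / 2 * (norm (M u))\<^sup>2"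
        and B = "\<lambda>u'. lam / 2 * (norm (M (u' - u k)))\<^sup>2"])
    show "f (u k) + ereal ((z (k-1) + lam *\<^sub>R (C (v k) - d)) \<bullet> M (u k) + lam / 2 * (norm (M (u k)))\<^sup>2)
        \<le> f u' + ereal ((z (k-1) + lam *\<^sub>R (C (v k) - d)) \<bullet> M u' + lam / 2 * (norm (M u'))\<^sup>2)" for u'
      using u_min[OF hk] .
    fix u' and t :: real
    have e: "M (u k + t *\<^sub>R (u' - u k)) = M (u k) + t *\<^sub>R M (u' - u k)"
      by (simp add: linear_add[OF M_lin] linear_scale[OF M_lin])
    have yk: "y k = (z (k-1) + lam *\<^sub>R (C (v k) - d)) + lam *\<^sub>R M (u k)"
      unfolding y_def by (simp add: algebra_simps)
    have a: "adjoint M (y k) \<bullet> (u' - u k) = M (u' - u k) \<bullet> ((z (k-1) + lam *\<^sub>R (C (v k) - d)) + lam *\<^sub>R M (u k))"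
      using adjoint_works[OF M_lin, of "u' - u k" "y k"] unfolding yk by (simp add: inner_commute)
    show "(z (k-1) + lam *\<^sub>R (C (v k) - d)) \<bullet> M (u k + t *\<^sub>R (u' - u k)) + lam / 2 * (norm (M (u k + t *\<^sub>R (u' - u k))))\<^sup>2
       = (z (k-1) + lam *\<^sub>R (C (v k) - d)) \<bullet> M (u k) + lam / 2 * (norm (M (u k)))\<^sup>2
         + t * (adjoint M (y k) \<bullet> (u' - u k)) + t\<^sup>2 * (lam / 2 * (norm (M (u' - u k)))\<^sup>2)"
      unfolding e a by (rule quad_expand)
  qed
  have dh1: "- M (u k) \<in> subdiff (h1fun f M) (y k)" if "k \<ge> 1" for k
    unfolding h1 by (rule conj_chain[OF M_lin sf[OF that]])
  have dh2: "- C (v k) + d \<in> subdiff (h2fun g C d) (x k)" if "k \<ge> 1" for k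
    unfolding h2 by (rule subdiff_add_lin[OF conj_chain[OF C_lin sg[OF that]]])
  define G2 where "G2 j = (norm (M (u j) + C (v j) - d))\<^sup>2 + lam\<^sup>2 * (norm (M (u j) - w (j-1)))\<^sup>2" for j
  define D where "D j = (gam j)\<^sup>2 * G2 j" for j
  have G2p: "G2 j > 0" if "j \<ge> 1" for j
  proof -
    have "norm (M (u j) + C (v j) - d) \<noteq> 0 \<or> norm (M (u j) - w (j-1)) \<noteq> 0" using no_stop[OF that] by auto
    then show ?thesis unfolding G2_def using lam_pos
      by (auto simp: add_pos_nonneg add_nonneg_pos)
  qed
  have fej: "(norm (z j - zs))\<^sup>2 + (norm (w j - ws))\<^sup>2 \<le> (norm (z (j-1) - zs))\<^sup>2 + (norm (w (j-1) - ws))\<^sup>2 - (1 - rhobar)\<^sup>2 * D j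
        \<and> tau / 2 \<le> gam j"
    if j: "j \<ge> 1" and p: "(zs, ws) \<in> S" for j zs ws
  proof -
    from p have p1: "- ws \<in> subdiff (h1fun f M) zs" and p2: "ws \<in> subdiff (h2fun g C d) zs"
      unfolding S_def Se_def by auto
    have m1: "0 \<le> (M (u j) - ws) \<bullet> (zs - y j)" using subdiff_mono[OF p1 dh1[OF j]] by simp
    have m2: "0 \<le> (ws + (C (v j) - d)) \<bullet> (zs - x j)" using subdiff_mono[OF p2 dh2[OF j]] by (simp add: algebra_simps)
    have mono: "0 \<le> (M (u j) - ws) \<bullet> (zs - (z (j-1) + lam *\<^sub>R w (j-1) + lam *\<^sub>R (C (v j) - d) - lam *\<^sub>R (w (j-1) - M (u j))))
        + (ws + (C (v j) - d)) \<bullet> (zs - (z (j-1) + lam *\<^sub>R w (j-1) + lam *\<^sub>R (C (v j) - d)))"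
      using m1 m2 unfolding x_def y_def by simp
    have Geq: "G2 j = (norm (M (u j) + (C (v j) - d)))\<^sup>2 + lam\<^sup>2 * (norm (w (j-1) - M (u j)))\<^sup>2"
      unfolding G2_def by (simp add: algebra_simps norm_minus_commute)
    have e1: "d - C (v j) - M (u j) = - (M (u j) + (C (v j) - d))" by (simp add: algebra_simps)
    have e2: "C (v j) - d + w (j-1) = (C (v j) - d) + w (j-1)" by simp
    have geq: "gam j = (lam * (norm ((C (v j) - d) + w (j-1)))\<^sup>2 + lam * ((- (M (u j) + (C (v j) - d))) \<bullet> (w (j-1) - M (u j)))) / G2 j"
      using gam_def[OF j] unfolding e1 G2_def by simp
    have rr: "0 \<le> rho j" using rho_range[OF j] rhobar by linarith
    note F = fejer_step[OF lam_pos rr Geq G2p[OF j] geq mono]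
    have zj: "z j = z (j-1) + (rho j * gam j) *\<^sub>R (M (u j) + (C (v j) - d))" using z_upd[OF j] by (simp add: algebra_simps)
    have rb: "(1 - rhobar)\<^sup>2 \<le> rho j * (2 - rho j)"
      using rho_range[OF j] rhobar by (smt (verit) mult_mono power2_eq_square)
    have "(1 - rhobar)\<^sup>2 * D j \<le> rho j * (2 - rho j) * D j"
      unfolding D_def using rb G2p[OF j] by (intro mult_right_mono) auto
    then show ?thesis using F unfolding zj w_upd[OF j] tau_def D_def by (simp add: algebra_simps)
  qed
  show ?thesis
  proof (intro allI impI conjI)
    fix k :: nat assume hk: "1 \<le> k"
    show "0 \<in> {s + adjoint C (x k) | s. s \<in> subdiff g (v k)}"
      using sg[OF hk] by (intro CollectI exI[of _ "- adjoint C (x k)"]) simp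
    show "0 \<in> {s + adjoint M (y k) | s. s \<in> subdiff f (u k)}"
      using sf[OF hk] by (intro CollectI exI[of _ "- adjoint M (y k)"]) simp
    have fin: "finite (D ` {1..k})" "D ` {1..k} \<noteq> {}" using hk by auto
    obtain i where i: "i \<in> {1..k}" "D i = Min (D ` {1..k})" using Min_in[OF fin] by auto
    have imin: "D i \<le> D j" if "j \<in> {1..k}" for j using i fin that by simp
    have i1: "i \<ge> 1" using i by simp
    have tau0: "0 \<le> tau / 2" unfolding tau_def using lam_pos by simp
    obtain zs ws where "(zs, ws) \<in> S" using Sne by auto
    have gi: "tau / 2 \<le> gam i" using fej[OF i1 \<open>(zs, ws) \<in> S\<close>] by simp
    have "(tau / 2)\<^sup>2 \<le> (gam i)\<^sup>2" using gi tau0 by (rule power_mono)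
    then have Db: "(tau / 2)\<^sup>2 * G2 i \<le> D i" unfolding D_def using G2p[OF i1] by (intro mult_right_mono) auto
    define K where "K = (1 - rhobar) * tau * sqrt (real k)"
    have Kp: "K > 0" unfolding K_def tau_def using lam_pos rhobar hk by simp
    have main: "K\<^sup>2 * G2 i \<le> 4 * (dist (z 0, w 0) p)\<^sup>2" if p: "p \<in> S" for p
    proof -
      obtain zs ws where pp: "p = (zs, ws)" by (cases p)
      define E where "E j = (norm (z j - zs))\<^sup>2 + (norm (w j - ws))\<^sup>2" for j
      have "(1 - rhobar)\<^sup>2 * (\<Sum>j\<in>{1..k}. D j) \<le> E 0 - E k"
        by (rule telescope) (use fej p pp in \<open>auto simp: E_def\<close>)
      moreover have "E k \<ge> 0" unfolding E_def by simp
      moreover have "real k * D i \<le> (\<Sum>j\<in>{1..k}. D j)"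
        using sum_bounded_below[of "{1..k}" "D i" D] imin by simp
      ultimately have "(1 - rhobar)\<^sup>2 * (real k * D i) \<le> E 0"
        by (smt (verit) mult_left_mono zero_le_power2)
      moreover have "E 0 = (dist (z 0, w 0) p)\<^sup>2" unfolding E_def pp dist_Pair_Pair by (simp add: dist_norm)
      moreover have "K\<^sup>2 * G2 i \<le> 4 * ((1 - rhobar)\<^sup>2 * (real k * D i))"
      proof -
        have "K\<^sup>2 * G2 i = 4 * ((1 - rhobar)\<^sup>2 * (real k * ((tau / 2)\<^sup>2 * G2 i)))"
          unfolding K_def by (simp add: power_mult_distrib power2_eq_square)
        also have "\<dots> \<le> 4 * ((1 - rhobar)\<^sup>2 * (real k * D i))"
          using Db by (intro mult_left_mono) auto
        finally show ?thesis .
      qed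
      ultimately show ?thesis by simp
    qed
    have d0S: "d0 = infdist (z 0, w 0) S" unfolding d0_def S_def by simp
    have r1: "norm (M (u i) + C (v i) - d) \<le> 2 * d0 / K"
      unfolding d0S
    proof (rule infdist_bound[OF Kp Sne])
      fix p assume "p \<in> S"
      have "(norm (M (u i) + C (v i) - d))\<^sup>2 \<le> G2 i" unfolding G2_def by simp
      then have "(K * norm (M (u i) + C (v i) - d))\<^sup>2 \<le> K\<^sup>2 * G2 i" unfolding power_mult_distrib by (rule mult_left_mono) simp_all
      then show "(K * norm (M (u i) + C (v i) - d))\<^sup>2 \<le> 4 * (dist (z 0, w 0) p)\<^sup>2" using main[OF \<open>p \<in> S\<close>] by simp
    qed
    have r2: "norm (x i - y i) \<le> 2 * d0 / K"
      unfolding d0S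
    proof (rule infdist_bound[OF Kp Sne])
      fix p assume "p \<in> S"
      have "x i - y i = lam *\<^sub>R (w (i-1) - M (u i))" unfolding x_def y_def by simp
      then have "(norm (x i - y i))\<^sup>2 = lam\<^sup>2 * (norm (M (u i) - w (i-1)))\<^sup>2"
        by (simp add: power_mult_distrib norm_minus_commute)
      then have "(norm (x i - y i))\<^sup>2 \<le> G2 i" unfolding G2_def by simp
      then have "(K * norm (x i - y i))\<^sup>2 \<le> K\<^sup>2 * G2 i" unfolding power_mult_distrib by (rule mult_left_mono) simp_all
      then show "(K * norm (x i - y i))\<^sup>2 \<le> 4 * (dist (z 0, w 0) p)\<^sup>2" using main[OF \<open>p \<in> S\<close>] by simp
    qed
    show "\<exists>i\<in>{1..k}.
          norm (M (u i) + C (v i) - d) \<le> 2 * d0 / ((1 - rhobar) * tau * sqrt (real k))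
        \<and> norm (x i - y i) \<le> 2 * d0 / ((1 - rhobar) * tau * sqrt (real k))"
      using i r1 r2 unfolding K_def by blast
  qed
qed
end
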